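(* Let $X=(X_1,\dots,X_p)^\top$ be a strictly positive random vector following a recursive max-linear structural equation model on a DAG $\mathcal G^*=(V,E^* )$, $V=\{1,\dots,p\}$: $X_j=\max\big(\max_{m\in\mathrm{pa}^*(j)}a_{mj}X_m,\ \epsilon_j\big)$ with $a_{mj}>0$ and mutually independent unit Fréchet innovations $\epsilon_1,\dots,\epsilon_p$. Fix a node $j$ with $\mathrm{pa}^*(j)\neq\emptyset$, and let $\mathrm{nb}^*(j)=\{i:(i,j)\in E^*\text{ or }(j,i)\in E^*\}$. Assume: (A) (non-vanishing error for omitted parents) for every nonempty $A\subseteq\mathrm{nb}^*(j)$ with $A\not\supseteq\mathrm{pa}^*(j)$, $\liminf_{u\to\infty}\big[R^\star_{j\mid A}(u)-R^\star_{j\mid\mathrm{pa}^*(j)}(u)\big]>0$; (B) (no gain from spurious supersets) for every $A\subseteq \mathrm{nb}^*(j)$ with $A\supsetneq\mathrm{pa}^*(j)$, $R^\star_{j\mid A}(u)\ge R^\star_{j\mid\mathrm{pa}^*(j)}(u)$ for all sufficiently large $u$. Then for every sufficiently large fixed threshold $u$, $\mathrm{pa}^*(j)$ is the unique inclusion-minimal minimizer of $A\mapsto R^\star_{j\mid A}(u)$ over nonempty $A\subseteq\mathrm{nb}^*(j)$; that is, it is a minimizer and every minimizer contains $\mathrm{pa}^*(j)$.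
   Context: For each $j$, $F_j$ is the distribution function of $X_j$, $Y_j=1/(1-F_j(X_j))$ and, for a threshold $u>1$, $Z_j=\log Y_j-\log u$. For a nonempty $A\subseteq V\setminus\{j\}$, the multivariate max-linear envelope class is $\mathcal H_A=\{h_A(z_A)=\max(c_0,\max_{m\in A}(z_m+c_{m\to j})): c_0, c_{m\to j}\in\mathbb R\}$, and the population tail prediction risk is $R^\star_{j\mid A}(u)=\inf_{h_A\in\mathcal H_A}\mathbb E\big[|Z_j-h_A(Z_A)|\ \big|\ \max_{m\in A}Z_m>0\big]$. *)

theory Defs
  imports "HOL-Probability.Probability"
begin

definition parents :: "(nat \<times> nat) set \<Rightarrow> nat \<Rightarrow> nat set" where
  "parents E j = {m. (m, j) \<in> E}"

definition neighbours :: "(nat \<times> nat) set \<Rightarrow> nat \<Rightarrow> nat set" where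
  "neighbours E j = {i. (i, j) \<in> E \<or> (j, i) \<in> E}"

definition unit_frechet :: "'a measure \<Rightarrow> ('a \<Rightarrow> real) \<Rightarrow> bool" where
  "unit_frechet M e \<longleftrightarrow> e \<in> borel_measurable M \<and>
     (\<forall>x. measure M {\<omega> \<in> space M. e \<omega> \<le> x} = (if x > 0 then exp (- 1 / x) else 0))"

definition max_linear_sem ::
  "'a measure \<Rightarrow> nat \<Rightarrow> (nat \<times> nat) set \<Rightarrow> (nat \<Rightarrow> nat \<Rightarrow> real) \<Rightarrow>
   (nat \<Rightarrow> 'a \<Rightarrow> real) \<Rightarrow> (nat \<Rightarrow> 'a \<Rightarrow> real) \<Rightarrow> bool" where
  "max_linear_sem M p E a eps X \<longleftrightarrow>
     prob_space M \<and>
     E \<subseteq> {1..p} \<times> {1..p} \<and> acyclic E \<and>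
     (\<forall>(m, j) \<in> E. a m j > 0) \<and>
     prob_space.indep_vars M (\<lambda>_. borel) eps {1..p} \<and>
     (\<forall>i \<in> {1..p}. unit_frechet M (eps i)) \<and>
     (\<forall>i \<in> {1..p}. \<forall>\<omega> \<in> space M. X i \<omega> > 0) \<and>
     (\<forall>j \<in> {1..p}. \<forall>\<omega> \<in> space M.
        X j \<omega> = Max (insert (eps j \<omega>) ((\<lambda>m. a m j * X m \<omega>) ` parents E j)))"

definition dist_fun :: "'a measure \<Rightarrow> (nat \<Rightarrow> 'a \<Rightarrow> real) \<Rightarrow> nat \<Rightarrow> real \<Rightarrow> real" where
  "dist_fun M X j x = measure M {\<omega> \<in> space M. X j \<omega> \<le> x}"

definition Zvar :: "'a measure \<Rightarrow> (nat \<Rightarrow> 'a \<Rightarrow> real) \<Rightarrow> real \<Rightarrow> nat \<Rightarrow> 'a \<Rightarrow> real" where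
  "Zvar M X u j \<omega> = ln (1 / (1 - dist_fun M X j (X j \<omega>))) - ln u"

definition envelope :: "real \<Rightarrow> (nat \<Rightarrow> real) \<Rightarrow> nat set \<Rightarrow> (nat \<Rightarrow> real) \<Rightarrow> real" where
  "envelope c0 c A z = max c0 (Max ((\<lambda>m. z m + c m) ` A))"

definition tail_event :: "'a measure \<Rightarrow> (nat \<Rightarrow> 'a \<Rightarrow> real) \<Rightarrow> real \<Rightarrow> nat set \<Rightarrow> 'a set" where
  "tail_event M X u A = {\<omega> \<in> space M. Max ((\<lambda>m. Zvar M X u m \<omega>) ` A) > 0}"

definition tail_loss ::
  "'a measure \<Rightarrow> (nat \<Rightarrow> 'a \<Rightarrow> real) \<Rightarrow> nat \<Rightarrow> nat set \<Rightarrow> real \<Rightarrow> real \<Rightarrow> (nat \<Rightarrow> real) \<Rightarrow> real" where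
  "tail_loss M X j A u c0 c =
     (\<integral>\<omega>. \<bar>Zvar M X u j \<omega> - envelope c0 c A (\<lambda>m. Zvar M X u m \<omega>)\<bar>
            * indicator (tail_event M X u A) \<omega> \<partial>M)
     / measure M (tail_event M X u A)"

definition tail_risk ::
  "'a measure \<Rightarrow> (nat \<Rightarrow> 'a \<Rightarrow> real) \<Rightarrow> nat \<Rightarrow> nat set \<Rightarrow> real \<Rightarrow> real" where
  "tail_risk M X j A u = (INF cc \<in> (UNIV :: (real \<times> (nat \<Rightarrow> real)) set).
                             tail_loss M X j A u (fst cc) (snd cc))"

end

theory Submission
  imports Defs
begin

theorem theorem2:
  fixes M :: "'a measure" and p :: nat and E :: "(nat \<times> nat) set"
    and a :: "nat \<Rightarrow> nat \<Rightarrow> real" and eps X :: "nat \<Rightarrow> 'a \<Rightarrow> real" and j :: nat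
  assumes sem: "max_linear_sem M p E a eps X"
    and j: "j \<in> {1..p}"
    and pa_ne: "parents E j \<noteq> {}"
    and A_cond: "\<And>A. A \<noteq> {} \<Longrightarrow> A \<subseteq> neighbours E j \<Longrightarrow> \<not> parents E j \<subseteq> A \<Longrightarrow>
        Liminf at_top (\<lambda>u. ereal (tail_risk M X j A u - tail_risk M X j (parents E j) u)) > 0"
    and B_cond: "\<And>A. A \<subseteq> neighbours E j \<Longrightarrow> parents E j \<subset> A \<Longrightarrow>
        eventually (\<lambda>u. tail_risk M X j A u \<ge> tail_risk M X j (parents E j) u) at_top"
  shows "\<exists>u0 > 1. \<forall>u \<ge> u0.
     (\<forall>B. B \<noteq> {} \<and> B \<subseteq> neighbours E j \<longrightarrow>
          tail_risk M X j (parents E j) u \<le> tail_risk M X j B u) \<and>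
     (\<forall>A. A \<noteq> {} \<and> A \<subseteq> neighbours E j \<and>
          (\<forall>B. B \<noteq> {} \<and> B \<subseteq> neighbours E j \<longrightarrow> tail_risk M X j A u \<le> tail_risk M X j B u)
          \<longrightarrow> parents E j \<subseteq> A)"
proof -
  let ?R = "\<lambda>A u. tail_risk M X j A u"
  let ?pa = "parents E j" and ?nb = "neighbours E j"
  have Esub: "E \<subseteq> {1..p} \<times> {1..p}" using sem unfolding max_linear_sem_def by blast
  have nbfin: "finite ?nb"
    by (rule finite_subset[of _ "{1..p}"]) (use Esub in \<open>auto simp: neighbours_def\<close>)
  have panb: "?pa \<subseteq> ?nb" by (auto simp: parents_def neighbours_def)
  have ev: "\<forall>A\<in>Pow ?nb - {{}}. eventually (\<lambda>u. (\<not> ?pa \<subseteq> A \<longrightarrow> ?R ?pa u < ?R A u)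
            \<and> (?pa \<subseteq> A \<longrightarrow> ?R ?pa u \<le> ?R A u)) at_top"
  proof
    fix A assume A: "A \<in> Pow ?nb - {{}}"
    show "eventually (\<lambda>u. (\<not> ?pa \<subseteq> A \<longrightarrow> ?R ?pa u < ?R A u)
            \<and> (?pa \<subseteq> A \<longrightarrow> ?R ?pa u \<le> ?R A u)) at_top"
    proof (cases "?pa \<subseteq> A")
      case False
      have "eventually (\<lambda>u. 0 < ereal (?R A u - ?R ?pa u)) at_top"
        by (rule less_LiminfD) (use A_cond[of A] A False in auto)
      then show ?thesis by eventually_elim (use False in auto)
    next
      case True
      show ?thesis
      proof (cases "A = ?pa")
        case True then show ?thesis by auto
      next
        case False
        with True have "?pa \<subset> A" by auto
        then have "eventually (\<lambda>u. ?R A u \<ge> ?R ?pa u) at_top"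
          using B_cond[of A] A by auto
        then show ?thesis by eventually_elim (use True in auto)
      qed
    qed
  qed
  have "eventually (\<lambda>u. \<forall>A\<in>Pow ?nb - {{}}. (\<not> ?pa \<subseteq> A \<longrightarrow> ?R ?pa u < ?R A u)
            \<and> (?pa \<subseteq> A \<longrightarrow> ?R ?pa u \<le> ?R A u)) at_top"
    by (rule eventually_ball_finite) (use nbfin ev in auto)
  then obtain u1 where u1: "\<And>u A. u \<ge> u1 \<Longrightarrow> A \<in> Pow ?nb - {{}} \<Longrightarrow>
     (\<not> ?pa \<subseteq> A \<longrightarrow> ?R ?pa u < ?R A u) \<and> (?pa \<subseteq> A \<longrightarrow> ?R ?pa u \<le> ?R A u)"
    unfolding eventually_at_top_linorder by blast
  show ?thesis
  proof (intro exI[of _ "max 2 u1"] conjI allI impI)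
    show "max 2 u1 > (1::real)" by simp
  next
    fix u B assume u: "max 2 u1 \<le> u" and B: "B \<noteq> {} \<and> B \<subseteq> ?nb"
    show "?R ?pa u \<le> ?R B u" using u1[of u B] u B by (cases "?pa \<subseteq> B") auto
  next
    fix u A assume u: "max 2 u1 \<le> u" and A: "A \<noteq> {} \<and> A \<subseteq> ?nb \<and>
          (\<forall>B. B \<noteq> {} \<and> B \<subseteq> ?nb \<longrightarrow> ?R A u \<le> ?R B u)"
    show "?pa \<subseteq> A"
    proof (rule ccontr)
      assume "\<not> ?pa \<subseteq> A"
      then have "?R ?pa u < ?R A u" using u1[of u A] u A by auto
      moreover have "?R A u \<le> ?R ?pa u" using A pa_ne panb by auto
      ultimately show False by simp
    qed
  qed
qed

end
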